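(* Let $S$ be a semigroup and $a_1,a_2,\dotsc$ a sequence in $S$. Then $a_1,a_2,\dotsc$ has a proper sumsequence if and only if it has a sumsequence $b_1,b_2,\dotsc$ with $\bigcap_{n=1}^{\infty}\mathrm{FS}(b_n,b_{n+1},\dotsc)=\emptyset$.
   Context: Semigroups are written additively and are not assumed commutative. For a sequence $a_1,a_2,\dotsc$ and a finite nonempty index set $F=\{i_1<\dotsb<i_m\}\subseteq\mathbb N$, let $a_F:=a_{i_1}+\dotsb+a_{i_m}$. For finite index sets $F_1,F_2$, write $F_1<F_2$ if every element of $F_1$ is smaller than every element of $F_2$. A sumsequence of $a_1,a_2,\dotsc$ is a sequence $a_{F_1},a_{F_2},\dotsc$ for some sequence $F_1<F_2<\dotsb$ of nonempty finite index sets. A sequence is proper if $a_{F_1}\ne a_{F_2}$ for all nonempty finite index sets $F_1<F_2$. $\mathrm{FS}(b_n,b_{n+1},\dotsc)$ denotes the set of all sums $b_{i_1}+\dotsb+b_{i_m}$ with $m\ge1$ and $n\le i_1<\dotsb<i_m$. *)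

theory Defs
  imports Main
begin

fun listsum1 :: "'a::semigroup_add list \<Rightarrow> 'a" where
  "listsum1 [] = undefined"
| "listsum1 [x] = x"
| "listsum1 (x # y # zs) = x + listsum1 (y # zs)"

definition idxsum :: "(nat \<Rightarrow> 'a::semigroup_add) \<Rightarrow> nat set \<Rightarrow> 'a" where
  "idxsum a F = listsum1 (map a (sorted_list_of_set F))"

definition set_less :: "nat set \<Rightarrow> nat set \<Rightarrow> bool" where
  "set_less F1 F2 \<longleftrightarrow> (\<forall>x\<in>F1. \<forall>y\<in>F2. x < y)"

definition is_sumsequence :: "(nat \<Rightarrow> 'a::semigroup_add) \<Rightarrow> (nat \<Rightarrow> 'a) \<Rightarrow> bool" where
  "is_sumsequence a b \<longleftrightarrow>
     (\<exists>F :: nat \<Rightarrow> nat set.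
        (\<forall>n. finite (F n) \<and> F n \<noteq> {}) \<and>
        (\<forall>m n. m < n \<longrightarrow> set_less (F m) (F n)) \<and>
        (\<forall>n. b n = idxsum a (F n)))"

definition proper_seq :: "(nat \<Rightarrow> 'a::semigroup_add) \<Rightarrow> bool" where
  "proper_seq a \<longleftrightarrow>
     (\<forall>F1 F2. finite F1 \<and> F1 \<noteq> {} \<and> finite F2 \<and> F2 \<noteq> {} \<and> set_less F1 F2
        \<longrightarrow> idxsum a F1 \<noteq> idxsum a F2)"

definition FS :: "(nat \<Rightarrow> 'a::semigroup_add) \<Rightarrow> nat \<Rightarrow> 'a set" where
  "FS b n = {idxsum b G | G. finite G \<and> G \<noteq> {} \<and> G \<subseteq> {n..}}"

end

theory Submission
  imports Defs
begin

lemma sls_image: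
  fixes n :: "nat \<Rightarrow> nat"
  assumes "strict_mono n" "finite F"
  shows "sorted_list_of_set (n ` F) = map n (sorted_list_of_set F)"
proof -
  have inj: "inj n" using assms(1) strict_mono_imp_inj_on by blast
  have "sorted_wrt (<) (map n (sorted_list_of_set F))"
    unfolding sorted_wrt_map
    by (rule sorted_wrt_mono_rel[OF _ sorted_list_of_set.strict_sorted_key_list_of_set])
       (use assms(1) in \<open>auto simp: strict_mono_def\<close>)
  moreover have "set (map n (sorted_list_of_set F)) = n ` F" using assms(2) by simp
  moreover have "length (map n (sorted_list_of_set F)) = card (n ` F)"
    using assms(2) inj by (simp add: card_image inj_on_subset)
  ultimately show ?thesis
    using sorted_list_of_set_unique[of "n ` F"] assms(2) by blast
qed

lemma idxsum_comp:
  assumes "strict_mono n" "finite F"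
  shows "idxsum (b \<circ> n) F = idxsum b (n ` F)"
  unfolding idxsum_def using sls_image[OF assms] by simp

lemma FS_mono:
  assumes "m \<le> m'"
  shows "FS b m' \<subseteq> FS b m"
  unfolding FS_def using assms by fastforce

lemma proper_imp_empty:
  assumes "proper_seq b"
  shows "(\<Inter>n. FS b n) = {}"
proof (rule ccontr)
  assume "(\<Inter>n. FS b n) \<noteq> {}"
  then obtain x where x: "\<And>n. x \<in> FS b n" by blast
  from x[of 0] obtain G1 where G1: "x = idxsum b G1" "finite G1" "G1 \<noteq> {}"
    unfolding FS_def by blast
  from x[of "Suc (Max G1)"] obtain G2 where G2: "x = idxsum b G2" "finite G2" "G2 \<noteq> {}"
    "G2 \<subseteq> {Suc (Max G1)..}"
    unfolding FS_def by blast
  have "set_less G1 G2" unfolding set_less_def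
  proof (intro ballI)
    fix u v assume "u \<in> G1" "v \<in> G2"
    then have "u \<le> Max G1" "v \<ge> Suc (Max G1)" using G1 G2 by auto
    then show "u < v" by simp
  qed
  then show False using assms G1 G2 unfolding proper_seq_def by metis
qed

theorem proposition2p3:
  fixes a :: "nat \<Rightarrow> 'a::semigroup_add"
  shows "(\<exists>b. is_sumsequence a b \<and> proper_seq b) \<longleftrightarrow>
         (\<exists>b. is_sumsequence a b \<and> (\<Inter>n. FS b n) = {})"
proof
  assume "\<exists>b. is_sumsequence a b \<and> proper_seq b"
  then show "\<exists>b. is_sumsequence a b \<and> (\<Inter>n. FS b n) = {}"
    using proper_imp_empty by blast
next
  assume "\<exists>b. is_sumsequence a b \<and> (\<Inter>n. FS b n) = {}"
  then obtain b where sb: "is_sumsequence a b" and emp: "(\<Inter>n. FS b n) = {}" by blast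
  from sb obtain F where F1: "\<forall>n. finite (F n) \<and> F n \<noteq> {}"
    and F2: "\<forall>m n. m < n \<longrightarrow> set_less (F m) (F n)"
    and F3: "\<forall>n. b n = idxsum a (F n)"
    unfolding is_sumsequence_def by blast
  define thr where "thr x = (SOME m. x \<notin> FS b m)" for x
  have thr: "x \<notin> FS b (thr x)" for x
  proof -
    have "\<exists>m. x \<notin> FS b m" using emp by blast
    then show ?thesis unfolding thr_def by (rule someI_ex)
  qed
  define V where "V k = {idxsum b H | H. H \<noteq> {} \<and> H \<subseteq> {0..k}}" for k
  have finV: "finite (V k)" for k
  proof -
    have "V k \<subseteq> idxsum b ` Pow {0..k}" unfolding V_def by auto
    then show ?thesis by (rule finite_subset) simp
  qed
  define n where "n = rec_nat 0 (\<lambda>_ m. Suc m + Max (insert 0 (thr ` V m)))"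
  have n0: "n 0 = 0" and nS: "n (Suc k) = Suc (n k) + Max (insert 0 (thr ` V (n k)))" for k
    unfolding n_def by simp_all
  have sm: "strict_mono n" unfolding strict_mono_Suc_iff using nS by simp
  have key: "x \<in> V (n k) \<Longrightarrow> x \<notin> FS b (n (Suc k))" for x k
  proof -
    assume "x \<in> V (n k)"
    then have "thr x \<le> Max (insert 0 (thr ` V (n k)))" using finV by (intro Max_ge) auto
    then have "thr x \<le> n (Suc k)" using nS by simp
    then show ?thesis using FS_mono thr by blast
  qed
  define c where "c = b \<circ> n"
  have "is_sumsequence a c"
    unfolding is_sumsequence_def
  proof (intro exI[of _ "F \<circ> n"] conjI allI impI)
    fix k :: nat show "finite ((F \<circ> n) k)" "(F \<circ> n) k \<noteq> {}" using F1 by auto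
  next
    fix m k :: nat assume "m < k" then show "set_less ((F \<circ> n) m) ((F \<circ> n) k)"
      using F2 sm by (simp add: strict_mono_less)
  next
    fix k :: nat show "c k = idxsum a ((F \<circ> n) k)" using F3 by (simp add: c_def)
  qed
  moreover have "proper_seq c"
    unfolding proper_seq_def
  proof (intro allI impI)
    fix G1 G2 assume h: "finite G1 \<and> G1 \<noteq> {} \<and> finite G2 \<and> G2 \<noteq> {} \<and> set_less G1 G2"
    define k where "k = Max G1"
    have "k \<in> G1" using h Max_in k_def by blast
    have le: "\<And>u. u \<in> G1 \<Longrightarrow> u \<le> k" using h k_def by simp
    have gt: "\<And>v. v \<in> G2 \<Longrightarrow> k < v" using h \<open>k \<in> G1\<close> unfolding set_less_def by blast
    have "idxsum c G1 = idxsum b (n ` G1)" unfolding c_def using idxsum_comp[OF sm] h by blast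
    moreover have "idxsum b (n ` G1) \<in> V (n k)"
      unfolding V_def using h le sm by (auto simp: strict_mono_less_eq)
    ultimately have n1: "idxsum c G1 \<notin> FS b (n (Suc k))" using key by simp
    have "idxsum c G2 = idxsum b (n ` G2)" unfolding c_def using idxsum_comp[OF sm] h by blast
    moreover have "n ` G2 \<subseteq> {n (Suc k)..}"
      using gt sm by (auto simp: strict_mono_less_eq Suc_le_eq)
    ultimately have "idxsum c G2 \<in> FS b (n (Suc k))"
      unfolding FS_def using h by blast
    with n1 show "idxsum c G1 \<noteq> idxsum c G2" by auto
  qed
  ultimately show "\<exists>b. is_sumsequence a b \<and> proper_seq b" by blast
qed

end
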